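(* Under algorithm ERGO with $\kappa\le1/18$ and $\epsilon<1/12$, for every iteration $i\ge0$, $B_i\le N_i/(18(1-\epsilon))$, where $B_i$ and $N_i$ denote respectively the number of bad IDs and the total number of IDs in the system at the end of iteration $i$.
   Context: Resource model. IDs are good (follow the protocol) or bad (controlled by a single adversary). A $k$-hard challenge imposes a cost $k$ on its solver. A round is the time to solve a $1$-hard challenge plus communication with the server. In any single round in which all IDs are solving challenges, the adversary can solve at most a $\kappa$-fraction of the challenges. In any round, at most an $\epsilon$-fraction of the good IDs depart. Joins and departures occur at distinct times; every joining ID is new. ERGO (run by a server, with GoodJEst running in parallel and providing a current estimate $\tilde J$ of the good join rate): initially, the system consists of the IDs that returned a valid solution to a $1$-hard challenge (this is the end of iteration $0$). Each subsequent iteration starts at some time $\tau$ with system $S(\tau)$; during it, every joining ID must solve a challenge of hardness $1$ plus the number of IDs that joined in the last $1/\tilde J$ seconds of the current iteration (the entrance cost). When the number of joining plus departing IDs in the iteration exceeds $|S(\tau)|/11$, a purge is performed: all IDs are issued a $1$-hard challenge, the system is reset to the IDs that solve it within one round, and the next iteration begins. *)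

theory Defs
  imports Complex_Main
begin

text \<open>IDs are of an arbitrary type 'id; the set good contains the good IDs,
  every other ID is bad (controlled by the adversary).\<close>

datatype 'id event = Join 'id | Depart 'id

fun apply_event :: "'id event \<Rightarrow> 'id set \<Rightarrow> 'id set" where
  "apply_event (Join x) S = insert x S"
| "apply_event (Depart x) S = S - {x}"

fun valid_events :: "'id set \<Rightarrow> 'id event list \<Rightarrow> bool" where
  "valid_events S [] = True"
| "valid_events S (Join x # es) = (x \<notin> S \<and> valid_events (insert x S) es)"
| "valid_events S (Depart x # es) = (x \<in> S \<and> valid_events (S - {x}) es)"

definition joined :: "'id event list \<Rightarrow> 'id list" where
  "joined es = [x. Join x \<leftarrow> es]"

text \<open>A single round in which every ID of issued is given a 1-hard challenge.
  solvers: IDs returning a valid solution within the round;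
  departs: good IDs that depart during the round.
  Resource model: good IDs follow the protocol (every good ID that does not depart
  solves the challenge within the round); at most an eps-fraction of the good IDs
  depart in the round; the adversary solves at most a kappa-fraction of the
  challenges solved when all IDs are solving (good challenges counted for all good
  IDs issued a challenge).\<close>
record 'id chround =
  issued :: "'id set"
  solvers :: "'id set"
  departs :: "'id set"

definition challenge_round :: "'id set \<Rightarrow> real \<Rightarrow> real \<Rightarrow> 'id chround \<Rightarrow> bool" where
  "challenge_round good \<kappa> \<epsilon> r \<longleftrightarrow>
     finite (issued r) \<and> solvers r \<subseteq> issued r \<and>
     departs r \<subseteq> issued r \<inter> good \<and> solvers r \<inter> departs r = {} \<and>
     (issued r \<inter> good) - departs r \<subseteq> solvers r \<and>
     real (card (departs r)) \<le> \<epsilon> * real (card (issued r \<inter> good)) \<and>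
     real (card (solvers r - good))
        \<le> \<kappa> * (real (card (issued r \<inter> good)) + real (card (solvers r - good)))"

text \<open>An execution of ERGO with m+1 completed iterations 0..m.
  sys i : the system at the end of iteration i;
  evs (i+1) : the join/departure events of iteration i+1 (in order), up to and
    including the one triggering the purge;
  pr i : the challenge round ending iteration i (the initial 1-hard challenge for
    i = 0, the purge for i \<ge> 1).\<close>
definition ergo_run ::
  "'id set \<Rightarrow> real \<Rightarrow> real \<Rightarrow> nat \<Rightarrow> (nat \<Rightarrow> 'id set) \<Rightarrow> (nat \<Rightarrow> 'id event list)
     \<Rightarrow> (nat \<Rightarrow> 'id chround) \<Rightarrow> bool" where
  "ergo_run good \<kappa> \<epsilon> m sys evs pr \<longleftrightarrow>
     challenge_round good \<kappa> \<epsilon> (pr 0) \<and> sys 0 = solvers (pr 0) \<and>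
     (\<forall>i<m.
        valid_events (sys i) (evs (Suc i)) \<and>
        distinct (joined (evs (Suc i))) \<and>
        (\<forall>x \<in> set (joined (evs (Suc i))). \<forall>j\<le>i. x \<notin> issued (pr j)) \<and>
        real (length (evs (Suc i))) > real (card (sys i)) / 11 \<and>
        real (length (evs (Suc i)) - 1) \<le> real (card (sys i)) / 11 \<and>
        issued (pr (Suc i)) = fold apply_event (evs (Suc i)) (sys i) \<and>
        challenge_round good \<kappa> \<epsilon> (pr (Suc i)) \<and>
        sys (Suc i) = solvers (pr (Suc i)))"

end

theory Submission
  imports Defs
begin

lemma round_bound:
  assumes k0: "0 \<le> \<kappa>" and k1: "\<kappa> \<le> 1/18" and e0: "0 \<le> \<epsilon>" and e1: "\<epsilon> < 1/12"
    and cr: "challenge_round good \<kappa> \<epsilon> r"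
  shows "real (card (solvers r - good)) \<le> real (card (solvers r)) / (18 * (1 - \<epsilon>))"
proof -
  have fin: "finite (issued r)" and sub: "solvers r \<subseteq> issued r"
    and dsub: "departs r \<subseteq> issued r \<inter> good"
    and gs: "(issued r \<inter> good) - departs r \<subseteq> solvers r"
    and dep: "real (card (departs r)) \<le> \<epsilon> * real (card (issued r \<inter> good))"
    and adv: "real (card (solvers r - good))
        \<le> \<kappa> * (real (card (issued r \<inter> good)) + real (card (solvers r - good)))"
    using cr unfolding challenge_round_def by auto
  define B where "B = real (card (solvers r - good))"
  define G where "G = real (card (issued r \<inter> good))"
  define N where "N = real (card (solvers r))"
  have fs: "finite (solvers r)" using fin sub finite_subset by blast
  have "card (solvers r) = card (solvers r - good) + card (solvers r \<inter> good)"
    using fs by (metis Int_commute card_Diff_subset_Int Diff_Diff_Int Int_lower2 card_Un_disjoint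
        Diff_disjoint finite_Diff finite_Int sup_commute Un_Diff_Int)
  moreover have "card ((issued r \<inter> good) - departs r) \<le> card (solvers r \<inter> good)"
    by (rule card_mono) (use fs gs in auto)
  moreover have "card ((issued r \<inter> good) - departs r) = card (issued r \<inter> good) - card (departs r)"
    using dsub fin by (meson card_Diff_subset finite_Int finite_subset)
  moreover have "card (departs r) \<le> card (issued r \<inter> good)"
    using dsub fin by (simp add: card_mono)
  ultimately have N1: "N \<ge> B + G - real (card (departs r))"
    unfolding N_def B_def G_def by linarith
  hence N2: "N \<ge> B + (1 - \<epsilon>) * G" using dep unfolding G_def by (simp add: algebra_simps)
  have adv': "B \<le> \<kappa> * (G + B)" using adv unfolding B_def G_def .
  have "\<kappa> * (G + B) \<le> (1/18) * (G + B)"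
    by (rule mult_right_mono) (use k1 in \<open>auto simp: B_def G_def\<close>)
  hence BG: "17 * B \<le> G" using adv' by (simp add: algebra_simps)
  have B0: "B \<ge> 0" unfolding B_def by simp
  have "(1 - \<epsilon>) * (17 * B) \<le> (1 - \<epsilon>) * G" using BG e1 by (intro mult_left_mono) auto
  moreover have "\<epsilon> * B \<ge> 0" using e0 B0 by simp
  ultimately have "18 * (1 - \<epsilon>) * B \<le> N" using N2 by (simp add: algebra_simps)
  hence "B * (18 * (1 - \<epsilon>)) \<le> N" by (simp add: algebra_simps)
  thus ?thesis unfolding B_def N_def using e1 by (simp add: pos_le_divide_eq)
qed

theorem lemma8:
  fixes good :: "'id set" and \<kappa> \<epsilon> :: real and m i :: nat
    and sys :: "nat \<Rightarrow> 'id set" and evs :: "nat \<Rightarrow> 'id event list"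
    and pr :: "nat \<Rightarrow> 'id chround"
  assumes "0 \<le> \<kappa>" and "\<kappa> \<le> 1/18" and "0 \<le> \<epsilon>" and "\<epsilon> < 1/12"
    and "ergo_run good \<kappa> \<epsilon> m sys evs pr"
    and "i \<le> m"
  shows "real (card (sys i - good)) \<le> real (card (sys i)) / (18 * (1 - \<epsilon>))"
proof -
  have "challenge_round good \<kappa> \<epsilon> (pr i) \<and> sys i = solvers (pr i)"
  proof (cases i)
    case 0 then show ?thesis using assms(5) unfolding ergo_run_def by auto
  next
    case (Suc j) then have "j < m" using assms(6) by auto
    then show ?thesis using assms(5) Suc unfolding ergo_run_def by blast
  qed
  then show ?thesis using round_bound[OF assms(1-4)] by metis
qed

end
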